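(* Let $H$ be a separable infinite-dimensional complex Hilbert space and $T\in\mathcal{L}(H)$. If any of the following conditions holds, then $T$ is not universal: (i) the interior of the point spectrum $\sigma_p(T;H)$ is empty; (ii) the interior of the essential spectrum $\sigma_e(T;H)$ is empty; (iii) every non-zero eigenvalue $\alpha\in\sigma_p(T;H)$ has finite multiplicity.
   Context: $\mathcal{L}(H)$ denotes the bounded linear operators on $H$. Operators $T_1\in\mathcal{L}(H_1)$, $T_2\in\mathcal{L}(H_2)$ are similar if there is a linear isomorphism $J:H_1\to H_2$ with $T_1=J^{-1}T_2J$. An operator $U\in\mathcal{L}(H)$ is universal if for every $T\in\mathcal{L}(H)$ there exist a closed subspace $M\subset H$ with $U(M)\subset M$ and a constant $c\neq0$ such that $U|_M:M\to M$ and $cT:H\to H$ are similar. $\sigma_p(T;H)$ is the point spectrum and $\sigma_e(T;H)=\{\lambda: T-\lambda I\text{ is not Fredholm}\}$ the essential spectrum. *)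

theory Defs
  imports "HOL-Analysis.Analysis"
begin

class complex_vector = real_vector +
  fixes scaleC :: "complex \<Rightarrow> 'a \<Rightarrow> 'a"
  assumes scaleC_add_right: "scaleC a (x + y) = scaleC a x + scaleC a y"
    and scaleC_add_left: "scaleC (a + b) x = scaleC a x + scaleC b x"
    and scaleC_scaleC: "scaleC a (scaleC b x) = scaleC (a * b) x"
    and scaleC_one: "scaleC 1 x = x"
    and scaleR_scaleC: "scaleR r x = scaleC (complex_of_real r) x"

class complex_inner = complex_vector + real_normed_vector +
  fixes cinner :: "'a \<Rightarrow> 'a \<Rightarrow> complex"
  assumes cinner_commute: "cinner x y = cnj (cinner y x)"
    and cinner_add_right: "cinner x (y + z) = cinner x y + cinner x z"
    and cinner_scaleC_right: "cinner x (scaleC c y) = c * cinner x y"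
    and cinner_ge_zero: "0 \<le> Re (cinner x x)"
    and cinner_eq_zero_iff: "cinner x x = 0 \<longleftrightarrow> x = 0"
    and norm_eq_sqrt_cinner: "norm x = sqrt (Re (cinner x x))"

class chilbert_space = complex_inner + complete_space

definition cspan :: "'a::complex_vector set \<Rightarrow> 'a set" where
  "cspan S = {(\<Sum>x\<in>F. scaleC (c x) x) | F c. finite F \<and> F \<subseteq> S}"

definition csubspace :: "'a::complex_vector set \<Rightarrow> bool" where
  "csubspace M \<longleftrightarrow> 0 \<in> M \<and> (\<forall>x\<in>M. \<forall>y\<in>M. x + y \<in> M) \<and> (\<forall>c. \<forall>x\<in>M. scaleC c x \<in> M)"

definition cfinite_dim :: "'a::complex_vector set \<Rightarrow> bool" where
  "cfinite_dim A \<longleftrightarrow> (\<exists>F. finite F \<and> cspan F = A)"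

definition countably_dense :: "'a::topological_space set \<Rightarrow> bool" where
  "countably_dense A \<longleftrightarrow> (\<exists>D. countable D \<and> D \<subseteq> A \<and> A \<subseteq> closure D)"

definition clinear_on :: "'a::complex_vector set \<Rightarrow> ('a \<Rightarrow> 'b::complex_vector) \<Rightarrow> bool" where
  "clinear_on M f \<longleftrightarrow> (\<forall>x\<in>M. \<forall>y\<in>M. f (x + y) = f x + f y) \<and> (\<forall>c. \<forall>x\<in>M. f (scaleC c x) = scaleC c (f x))"

definition cbounded_on :: "'a::real_normed_vector set \<Rightarrow> ('a \<Rightarrow> 'b::real_normed_vector) \<Rightarrow> bool" where
  "cbounded_on M f \<longleftrightarrow> (\<exists>K. \<forall>x\<in>M. norm (f x) \<le> K * norm x)"

definition bounded_clinear_op :: "('a::complex_inner \<Rightarrow> 'a) \<Rightarrow> bool" where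
  "bounded_clinear_op T \<longleftrightarrow> clinear_on UNIV T \<and> cbounded_on UNIV T"

definition similar_ops ::
  "'a::complex_inner set \<Rightarrow> ('a \<Rightarrow> 'a) \<Rightarrow> 'b::complex_inner set \<Rightarrow> ('b \<Rightarrow> 'b) \<Rightarrow> bool" where
  "similar_ops M A N B \<longleftrightarrow>
     (\<exists>J. bij_betw J M N \<and> clinear_on M J \<and> cbounded_on M J \<and> cbounded_on N (inv_into M J)
        \<and> (\<forall>x\<in>M. A x = inv_into M J (B (J x))))"

definition universal_op :: "('a::chilbert_space \<Rightarrow> 'a) \<Rightarrow> bool" where
  "universal_op U \<longleftrightarrow> bounded_clinear_op U \<and>
     (\<forall>T. bounded_clinear_op T \<longrightarrow>
        (\<exists>M c. csubspace M \<and> closed M \<and> U ` M \<subseteq> M \<and> c \<noteq> 0 \<and>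
               similar_ops M U (UNIV :: 'a set) (\<lambda>x. scaleC c (T x))))"

definition point_spectrum :: "('a::complex_vector \<Rightarrow> 'a) \<Rightarrow> complex set" where
  "point_spectrum T = {z. \<exists>x. x \<noteq> 0 \<and> T x = scaleC z x}"

definition eigenspace :: "('a::complex_vector \<Rightarrow> 'a) \<Rightarrow> complex \<Rightarrow> 'a set" where
  "eigenspace T \<alpha> = {x. T x = scaleC \<alpha> x}"

text \<open>Fredholm: closed range, finite-dimensional kernel, finite-codimensional range.\<close>
definition fredholm :: "('a::complex_inner \<Rightarrow> 'a) \<Rightarrow> bool" where
  "fredholm S \<longleftrightarrow> closed (range S) \<and> cfinite_dim {x. S x = 0} \<and>
     (\<exists>F. finite F \<and> cspan (range S \<union> F) = UNIV)"

definition essential_spectrum :: "('a::complex_inner \<Rightarrow> 'a) \<Rightarrow> complex set" where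
  "essential_spectrum T = {z. \<not> fredholm (\<lambda>x. T x - scaleC z x)}"

end

theory Submission
  imports Defs "HOL-Library.Nat_Bijection"
begin


interpretation cvs: vector_space "scaleC :: complex \<Rightarrow> 'a \<Rightarrow> 'a::complex_vector"
  by unfold_locales (auto simp: scaleC_add_right scaleC_add_left scaleC_scaleC scaleC_one)

lemma cspan_eq: "cspan S = cvs.span S"
  unfolding cspan_def cvs.span_explicit by blast

lemma cinner_scaleC_left: "cinner (scaleC c x) y = cnj c * cinner x y"
  by (metis cinner_commute cinner_scaleC_right complex_cnj_cnj complex_cnj_mult)

lemma cinner_add_left: "cinner (x + y) z = cinner x z + cinner y z"
  by (metis cinner_commute cinner_add_right complex_cnj_add)

lemma cinner_zero_right[simp]: "cinner x 0 = 0"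
  using cinner_add_right[of x 0 0] by simp

lemma cinner_zero_left[simp]: "cinner 0 x = 0"
  using cinner_add_left[of 0 0 x] by simp

lemma cinner_diff_right: "cinner x (y - z) = cinner x y - cinner x z"
  using cinner_add_right[of x "y - z" z] by simp

lemma cinner_diff_left: "cinner (y - z) x = cinner y x - cinner z x"
  using cinner_add_left[of "y - z" z x] by simp

lemma cinner_sum_right: "cinner x (\<Sum>i\<in>F. f i) = (\<Sum>i\<in>F. cinner x (f i))"
  by (induction F rule: infinite_finite_induct) (auto simp: cinner_add_right)

lemma cinner_sum_left: "cinner (\<Sum>i\<in>F. f i) x = (\<Sum>i\<in>F. cinner (f i) x)"
  by (induction F rule: infinite_finite_induct) (auto simp: cinner_add_left)

lemma cinner_self: "cinner x x = complex_of_real ((norm x)^2)"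
proof -
  have r: "Im (cinner x x) = 0" using cinner_commute[of x x]
    by (metis cnj.simps(2) neg_equal_zero)
  have "(norm x)^2 = Re (cinner x x)" using norm_eq_sqrt_cinner[of x] cinner_ge_zero[of x] by simp
  then show ?thesis using r by (simp add: complex_eq_iff)
qed

lemma norm_sq_Re: "(norm x)^2 = Re (cinner x x)"
  using cinner_self[of x] by simp

lemma norm_scaleC: "norm (scaleC c (x::'a::complex_inner)) = cmod c * norm x"
proof -
  have "cinner (scaleC c x) (scaleC c x) = cnj c * c * cinner x x"
    by (simp add: cinner_scaleC_left cinner_scaleC_right mult.assoc)
  also have "\<dots> = complex_of_real ((cmod c * norm x)^2)"
    by (simp add: cinner_self power_mult_distrib mult.commute) (metis complex_norm_square of_real_power)
  finally have "(norm (scaleC c x))^2 = (cmod c * norm x)^2" by (simp add: norm_sq_Re)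
  then show ?thesis by (simp add: power2_eq_iff_nonneg)
qed

lemma scaleC_of_real: "scaleC (complex_of_real r) x = scaleR r x"
  by (simp add: scaleR_scaleC)

lemma bounded_linear_scaleC: "bounded_linear (\<lambda>x::'a::complex_inner. scaleC c x)"
proof
  show "scaleC c (x + y) = scaleC c x + scaleC c y" for x y :: 'a by (rule scaleC_add_right)
  show "scaleC c (scaleR r x) = scaleR r (scaleC c x)" for r and x :: 'a
    by (simp add: scaleR_scaleC scaleC_scaleC mult.commute)
  show "\<exists>K. \<forall>x::'a. norm (scaleC c x) \<le> norm x * K"
    by (rule exI[of _ "cmod c"]) (simp add: norm_scaleC)
qed

lemma mult_cnj_sq: "z * cnj z = (complex_of_real (cmod z))^2" "cnj z * z = (complex_of_real (cmod z))^2"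
  by (metis complex_norm_square of_real_power, metis complex_norm_square of_real_power mult.commute)

definition ortho :: "('i \<Rightarrow> 'a::complex_inner) \<Rightarrow> bool" where
  "ortho e \<longleftrightarrow> (\<forall>i j. cinner (e i) (e j) = (if i = j then 1 else 0))"

lemma ortho_inner_comb:
  assumes "ortho e" "finite F"
  shows "cinner (e j) (\<Sum>i\<in>F. scaleC (a i) (e i)) = (if j \<in> F then a j else 0)"
proof -
  have "cinner (e j) (\<Sum>i\<in>F. scaleC (a i) (e i)) = (\<Sum>i\<in>F. (if j = i then a i else 0))"
    using assms(1) unfolding ortho_def by (auto simp: cinner_sum_right cinner_scaleC_right intro!: sum.cong)
  also have "\<dots> = (if j \<in> F then a j else 0)" using assms(2) by (simp add: sum.delta)
  finally show ?thesis .
qed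

lemma ortho_cinner_comb_self:
  assumes "ortho e" "finite F"
  shows "cinner (\<Sum>i\<in>F. scaleC (a i) (e i)) (\<Sum>i\<in>F. scaleC (a i) (e i))
     = complex_of_real (\<Sum>i\<in>F. (cmod (a i))^2)"
proof -
  have "cinner (\<Sum>i\<in>F. scaleC (a i) (e i)) (\<Sum>i\<in>F. scaleC (a i) (e i))
     = (\<Sum>j\<in>F. cnj (a j) * cinner (e j) (\<Sum>i\<in>F. scaleC (a i) (e i)))"
    by (simp add: cinner_sum_left cinner_scaleC_left)
  also have "\<dots> = (\<Sum>j\<in>F. cnj (a j) * a j)"
    using ortho_inner_comb[OF assms] by simp
  also have "\<dots> = (\<Sum>j\<in>F. complex_of_real ((cmod (a j))^2))"
    by (simp add: mult_cnj_sq)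
  finally show ?thesis by simp
qed

lemma ortho_norm_comb:
  assumes "ortho e" "finite F"
  shows "(norm (\<Sum>i\<in>F. scaleC (a i) (e i)))^2 = (\<Sum>i\<in>F. (cmod (a i))^2)"
  using ortho_cinner_comb_self[OF assms, of a] by (simp add: norm_sq_Re)

lemma bessel_finite:
  assumes "ortho e" "finite F"
  shows "(\<Sum>i\<in>F. (cmod (cinner (e i) x))^2) \<le> (norm x)^2"
proof -
  define c where "c i = cinner (e i) x" for i
  define s where "s = (\<Sum>i\<in>F. scaleC (c i) (e i))"
  define S where "S = (\<Sum>i\<in>F. (cmod (c i))^2)"
  have sx: "cinner s x = complex_of_real S"
    unfolding s_def S_def by (simp add: cinner_sum_left cinner_scaleC_left c_def[symmetric]
        mult_cnj_sq)
  have xs: "cinner x s = complex_of_real S"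
    using sx cinner_commute[of x s] by simp
  have ss: "cinner s s = complex_of_real S"
    unfolding s_def S_def by (rule ortho_cinner_comb_self[OF assms])
  have "cinner (x - s) (x - s) = cinner x x - cinner x s - cinner s x + cinner s s"
    by (simp add: cinner_diff_left cinner_diff_right)
  also have "\<dots> = complex_of_real ((norm x)^2 - S)"
    by (simp only: sx xs ss) (simp add: cinner_self)
  finally have "0 \<le> (norm x)^2 - S" using cinner_ge_zero[of "x - s"] by simp
  then show ?thesis unfolding S_def c_def by simp
qed

lemma bounded_linear_cinner_ortho:
  assumes "ortho e"
  shows "bounded_linear (\<lambda>x. cinner (e j) x)"
proof
  show "cinner (e j) (x + y) = cinner (e j) x + cinner (e j) y" for x y by (rule cinner_add_right)
  show "cinner (e j) (scaleR r x) = scaleR r (cinner (e j) x)" for r x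
    by (simp add: scaleR_scaleC cinner_scaleC_right scaleR_conv_of_real)
  show "\<exists>K. \<forall>x. norm (cinner (e j) x) \<le> norm x * K"
  proof (intro exI[of _ 1] allI)
    fix x
    have "(cmod (cinner (e j) x))^2 \<le> (norm x)^2"
      using bessel_finite[OF assms, of "{j}" x] by simp
    then show "norm (cinner (e j) x) \<le> norm x * 1" using power2_le_imp_le by fastforce
  qed
qed

lemma summable_by_sq_bound:
  fixes f :: "'i \<Rightarrow> 'b::{real_normed_vector,complete_space}" and g :: "'i \<Rightarrow> real"
  assumes gs: "g summable_on A"
    and bd: "\<And>G. finite G \<Longrightarrow> G \<subseteq> A \<Longrightarrow> (norm (sum f G))^2 \<le> sum g G"
  shows "f summable_on A"
proof -
  from gs obtain L where lim: \<open>(sum g \<longlongrightarrow> L) (finite_subsets_at_top A)\<close>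
    unfolding has_sum_def summable_on_def by blast
  have \<open>\<exists>P. eventually P (finite_subsets_at_top A) \<and>
              (\<forall>F F'. P F \<and> P F' \<longrightarrow> dist (sum f F) (sum f F') < e)\<close> if \<open>e>0\<close> for e
  proof -
    define d P where \<open>d = e^2/8\<close> and \<open>P F \<longleftrightarrow> finite F \<and> F \<subseteq> A \<and> dist (sum g F) L < d\<close> for F
    have \<open>d > 0\<close>
      unfolding d_def using \<open>e > 0\<close> by simp
    have ev_P: \<open>eventually P (finite_subsets_at_top A)\<close>
      using lim
      by (auto simp add: P_def[abs_def] \<open>0 < d\<close> eventually_conj_iff eventually_finite_subsets_at_top_weakI tendsto_iff)
    moreover have \<open>dist (sum f F1) (sum f F2) < e\<close> if \<open>P F1\<close> and \<open>P F2\<close> for F1 F2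
    proof -
      from ev_P
      obtain F' where \<open>finite F'\<close> and \<open>F' \<subseteq> A\<close> and P_sup_F': \<open>finite F \<and> F \<supseteq> F' \<and> F \<subseteq> A \<Longrightarrow> P F\<close> for F
        by atomize_elim (simp add: eventually_finite_subsets_at_top)
      define F where \<open>F = F' \<union> F1 \<union> F2\<close>
      have \<open>finite F\<close> and \<open>F \<subseteq> A\<close>
        using F_def P_def[abs_def] that \<open>finite F'\<close> \<open>F' \<subseteq> A\<close> by auto
      have dist_F: \<open>dist (sum g F) L < d\<close>
        by (metis F_def \<open>F \<subseteq> A\<close> P_def P_sup_F' \<open>finite F\<close> le_supE order_refl)
      have dist_F_subset: \<open>dist (sum f F) (sum f F') < e/2\<close> if F': \<open>F' \<subseteq> F\<close> \<open>P F'\<close> for F'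
      proof -
        have eq: \<open>dist (sum f F) (sum f F') = norm (sum f (F-F'))\<close>
          unfolding dist_norm using \<open>finite F\<close> F' by (subst sum_diff) auto
        have \<open>(norm (sum f (F-F')))^2 \<le> sum g (F - F')\<close>
          using bd[of "F - F'"] \<open>finite F\<close> \<open>F \<subseteq> A\<close> by auto
        also have \<open>\<dots> = sum g F - sum g F'\<close>
          using \<open>finite F\<close> F' by (subst sum_diff) auto
        also have \<open>\<dots> < 2 * d\<close>
          using dist_F F' unfolding P_def dist_norm real_norm_def by linarith
        also have \<open>\<dots> = (e/2)^2\<close> by (simp add: d_def power2_eq_square)
        finally have \<open>(norm (sum f (F-F')))^2 < (e/2)^2\<close> .
        then have \<open>norm (sum f (F-F')) < e/2\<close>
          by (rule power_less_imp_less_base[of _ 2]) (use \<open>e > 0\<close> in auto)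
        then show ?thesis using eq by simp
      qed
      have \<open>dist (sum f F1) (sum f F2) \<le> dist (sum f F) (sum f F1) + dist (sum f F) (sum f F2)\<close>
        by (rule dist_triangle3)
      also have \<open>\<dots> < e/2 + e/2\<close>
        by (intro add_strict_mono dist_F_subset that) (auto simp: F_def)
      also have \<open>\<dots> \<le> e\<close>
        by auto
      finally show \<open>dist (sum f F1) (sum f F2) < e\<close> .
    qed
    ultimately show ?thesis
      by blast
  qed
  then have \<open>cauchy_filter (filtermap (sum f) (finite_subsets_at_top A))\<close>
    by (simp add: cauchy_filter_metric_filtermap)
  moreover have "complete (UNIV::'b set)"
    by (meson Cauchy_convergent UNIV_I complete_def convergent_def)
  ultimately obtain L' where \<open>(sum f \<longlongrightarrow> L') (finite_subsets_at_top A)\<close>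
    using complete_uniform[where S=UNIV] by (force simp add: filterlim_def)
  then show ?thesis
    using summable_on_def has_sum_def by blast
qed

lemma ortho_summable:
  fixes e :: "'i \<Rightarrow> 'a::chilbert_space"
  assumes "ortho e" "(\<lambda>i. (cmod (a i))^2) summable_on A"
  shows "(\<lambda>i. scaleC (a i) (e i)) summable_on A"
  by (rule summable_by_sq_bound[OF assms(2)]) (simp add: ortho_norm_comb[OF assms(1)])

lemma ortho_has_sum_inner:
  assumes "ortho e" "((\<lambda>i. scaleC (a i) (e i)) has_sum s) A"
  shows "cinner (e j) s = (if j \<in> A then a j else 0)"
proof -
  have h: "((\<lambda>i. cinner (e j) (scaleC (a i) (e i))) has_sum cinner (e j) s) A"
    by (rule has_sum_bounded_linear[OF bounded_linear_cinner_ortho[OF assms(1)] assms(2)])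
  have eq: "(\<lambda>i. cinner (e j) (scaleC (a i) (e i))) = (\<lambda>i. if i = j then a j else 0)"
  proof
    fix i
    have "cinner (e j) (e i) = (if j = i then 1 else 0)" using assms(1) unfolding ortho_def by blast
    then show "cinner (e j) (scaleC (a i) (e i)) = (if i = j then a j else 0)"
      by (auto simp: cinner_scaleC_right)
  qed
  have "((\<lambda>i. if i = j then a j else 0) has_sum (if j \<in> A then a j else 0)) A"
  proof (cases "j \<in> A")
    case True
    have "((\<lambda>i. if i = j then a j else 0) has_sum a j) {j}"
      using has_sum_finite[of "{j}" "\<lambda>i. if i = j then a j else 0"] by simp
    moreover have "((\<lambda>i. if i = j then a j else 0) has_sum a j) A \<longleftrightarrow> ((\<lambda>i. if i = j then a j else 0) has_sum a j) {j}"
      by (rule has_sum_cong_neutral) (use True in auto)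
    ultimately show ?thesis using True by simp
  next
    case False
    have "((\<lambda>i. if i = j then a j else 0) has_sum 0) A \<longleftrightarrow> ((\<lambda>i. if i = j then a j else 0) has_sum 0) {}"
      by (rule has_sum_cong_neutral) (use False in auto)
    then show ?thesis using False by simp
  qed
  moreover have "((\<lambda>i. if i = j then a j else 0) has_sum cinner (e j) s) A"
    using h unfolding eq .
  ultimately show ?thesis using has_sum_unique by blast
qed

lemma ortho_has_sum_norm:
  assumes "ortho e" "((\<lambda>i. scaleC (a i) (e i)) has_sum s) A"
    and "\<And>F. finite F \<Longrightarrow> F \<subseteq> A \<Longrightarrow> (\<Sum>i\<in>F. (cmod (a i))^2) \<le> B"
  shows "(norm s)^2 \<le> B"
proof -
  have "((\<lambda>F. sum (\<lambda>i. scaleC (a i) (e i)) F) \<longlongrightarrow> s) (finite_subsets_at_top A)"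
    using assms(2) by (simp add: has_sum_def)
  then have "((\<lambda>F. (norm (sum (\<lambda>i. scaleC (a i) (e i)) F))^2) \<longlongrightarrow> (norm s)^2) (finite_subsets_at_top A)"
    by (intro tendsto_intros)
  moreover have "\<forall>\<^sub>F F in finite_subsets_at_top A. (norm (sum (\<lambda>i. scaleC (a i) (e i)) F))^2 \<le> B"
    by (rule eventually_finite_subsets_at_top_weakI) (simp add: ortho_norm_comb[OF assms(1)] assms(3))
  ultimately show ?thesis
    using tendsto_upperbound finite_subsets_at_top_neq_bot by blast
qed

lemma ortho_extend:
  fixes S :: "'a::complex_inner set"
  assumes nf: "\<not> cfinite_dim (UNIV :: 'a set)" and fin: "finite S"
    and on: "\<forall>s\<in>S. \<forall>t\<in>S. cinner s t = (if s = t then 1 else 0)"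
  shows "\<exists>y. norm y = 1 \<and> (\<forall>s\<in>S. cinner s y = 0)"
proof -
  have "cspan S \<noteq> UNIV" using nf fin unfolding cfinite_dim_def by blast
  then obtain x where x: "x \<notin> cspan S" by blast
  define z where "z = x - (\<Sum>s\<in>S. scaleC (cinner s x) s)"
  have orth: "cinner t z = 0" if "t \<in> S" for t
  proof -
    have "cinner t (\<Sum>s\<in>S. scaleC (cinner s x) s) = (\<Sum>s\<in>S. cinner s x * cinner t s)"
      by (simp add: cinner_sum_right cinner_scaleC_right)
    also have "\<dots> = (\<Sum>s\<in>S. if t = s then cinner s x else 0)"
      using on that by (intro sum.cong) auto
    also have "\<dots> = cinner t x" using fin that by (simp add: sum.delta)
    finally show ?thesis unfolding z_def by (simp add: cinner_diff_right)
  qed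
  have "z \<noteq> 0"
  proof
    assume "z = 0"
    then have "x = (\<Sum>s\<in>S. scaleC (cinner s x) s)" unfolding z_def by simp
    then have "x \<in> cspan S" unfolding cspan_def mem_Collect_eq
      by (intro exI[of _ S] exI[of _ "\<lambda>s. cinner s x"]) (simp add: fin)
    then show False using x by blast
  qed
  then have nz: "norm z \<noteq> 0" by simp
  define y where "y = scaleC (complex_of_real (1 / norm z)) z"
  have "norm y = 1" unfolding y_def scaleC_of_real using nz by simp
  moreover have "\<forall>s\<in>S. cinner s y = 0" unfolding y_def using orth by (simp add: cinner_scaleC_right)
  ultimately show ?thesis by blast
qed

definition next_vec :: "'a::complex_inner list \<Rightarrow> 'a" where
  "next_vec xs = (SOME y. norm y = 1 \<and> (\<forall>s\<in>set xs. cinner s y = 0))"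

primrec gs_list :: "nat \<Rightarrow> 'a::complex_inner list" where
  "gs_list 0 = []"
| "gs_list (Suc n) = gs_list n @ [next_vec (gs_list n)]"

lemma gs_list_props:
  assumes nf: "\<not> cfinite_dim (UNIV :: 'a::complex_inner set)"
  shows "length (gs_list n :: 'a list) = n \<and> distinct (gs_list n :: 'a list) \<and>
    (\<forall>s\<in>set (gs_list n :: 'a list). \<forall>t\<in>set (gs_list n). cinner s t = (if s = t then 1 else 0))"
proof (induction n)
  case 0
  then show ?case by simp
next
  case (Suc n)
  let ?L = "gs_list n :: 'a list"
  let ?y = "next_vec ?L"
  have "\<exists>y. norm y = 1 \<and> (\<forall>s\<in>set ?L. cinner s y = 0)"
    by (rule ortho_extend[OF nf]) (use Suc in auto)
  then have "norm ?y = 1 \<and> (\<forall>s\<in>set ?L. cinner s ?y = 0)"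
    unfolding next_vec_def by (rule someI_ex)
  then have y: "norm ?y = 1" "\<forall>s\<in>set ?L. cinner s ?y = 0" by auto
  have yy: "cinner ?y ?y = 1" using y(1) by (simp add: cinner_self)
  have ys: "\<forall>s\<in>set ?L. cinner ?y s = 0"
  proof
    fix s assume "s \<in> set ?L"
    then have "cinner s ?y = 0" using y(2) by blast
    then show "cinner ?y s = 0" by (subst cinner_commute) simp
  qed
  have notin: "?y \<notin> set ?L"
  proof
    assume "?y \<in> set ?L"
    then have "cinner ?y ?y = 0" using y(2) by blast
    then show False using yy by simp
  qed
  have IH: "length ?L = n" "distinct ?L"
     "\<forall>s\<in>set ?L. \<forall>t\<in>set ?L. cinner s t = (if s = t then 1 else 0)" using Suc by auto
  have "\<forall>s\<in>set (gs_list (Suc n) :: 'a list). \<forall>t\<in>set (gs_list (Suc n)). cinner s t = (if s = t then 1 else 0)"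
  proof (intro ballI)
    fix s t assume "s \<in> set (gs_list (Suc n) :: 'a list)" "t \<in> set (gs_list (Suc n) :: 'a list)"
    then have s: "s = ?y \<or> s \<in> set ?L" and t: "t = ?y \<or> t \<in> set ?L" by auto
    show "cinner s t = (if s = t then 1 else 0)"
    proof (cases "s = ?y")
      case True
      then show ?thesis using t ys yy notin by auto
    next
      case False
      then have sL: "s \<in> set ?L" using s by blast
      show ?thesis
      proof (cases "t = ?y")
        case True
        then show ?thesis using sL y(2) notin by auto
      next
        case False
        then show ?thesis using sL t IH(3) by blast
      qed
    qed
  qed
  then show ?case using IH notin by simp
qed

lemma length_gs_list[simp]: "length (gs_list n) = n"
  by (induction n) auto

lemma gs_list_prefix: "i < n \<Longrightarrow> (gs_list (n + k) :: 'a::complex_inner list) ! i = gs_list n ! i"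
proof (induction k)
  case 0
  then show ?case by simp
next
  case (Suc k)
  have "length (gs_list (n + k) :: 'a list) = n + k" by simp
  then show ?case using Suc by (simp add: nth_append)
qed

lemma exists_ortho_seq:
  assumes nf: "\<not> cfinite_dim (UNIV :: 'a::complex_inner set)"
  shows "\<exists>e :: nat \<Rightarrow> 'a. ortho e"
proof -
  define e :: "nat \<Rightarrow> 'a" where "e i = gs_list (Suc i) ! i" for i
  have ej: "e i = gs_list (Suc j) ! i" if "i \<le> j" for i j
  proof -
    have "gs_list (Suc i + (j - i)) ! i = (gs_list (Suc i) ! i :: 'a)"
      by (rule gs_list_prefix) simp
    then show ?thesis unfolding e_def using that by simp
  qed
  have "cinner (e i) (e j) = (if i = j then 1 else 0)" for i j
  proof -
    define m where "m = max i j"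
    have P: "distinct (gs_list (Suc m) :: 'a list)"
      "\<forall>s\<in>set (gs_list (Suc m) :: 'a list). \<forall>t\<in>set (gs_list (Suc m)). cinner s t = (if s = t then 1 else 0)"
      using gs_list_props[OF nf, of "Suc m"] by auto
    have ei: "e i = gs_list (Suc m) ! i" and ejj: "e j = gs_list (Suc m) ! j"
      using ej m_def by auto
    have li: "i < length (gs_list (Suc m) :: 'a list)" and lj: "j < length (gs_list (Suc m) :: 'a list)"
      by (simp_all add: m_def)
    have in1: "e i \<in> set (gs_list (Suc m))" unfolding ei by (rule nth_mem[OF li])
    have in2: "e j \<in> set (gs_list (Suc m))" unfolding ejj by (rule nth_mem[OF lj])
    have "e i = e j \<longleftrightarrow> i = j"
      unfolding ei ejj using nth_eq_iff_index_eq[OF P(1) li lj] .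
    then show ?thesis using P(2) in1 in2 by auto
  qed
  then show ?thesis unfolding ortho_def by blast
qed

definition shiftop :: "(nat \<times> nat \<Rightarrow> 'a::complex_inner) \<Rightarrow> 'a \<Rightarrow> 'a" where
  "shiftop f x = infsum (\<lambda>p. scaleC (cinner (f (Suc (fst p), snd p)) x) (f p)) UNIV"

lemma shift_coef_bound:
  fixes f :: "nat \<times> nat \<Rightarrow> 'a::complex_inner"
  assumes "ortho f" "finite F"
  shows "(\<Sum>p\<in>F. (cmod (cinner (f (Suc (fst p), snd p)) x))^2) \<le> (norm x)^2"
proof -
  define \<sigma> where "\<sigma> p = (Suc (fst p), snd p)" for p :: "nat \<times> nat"
  have inj: "inj_on \<sigma> F" unfolding \<sigma>_def inj_on_def by auto
  have "(\<Sum>p\<in>F. (cmod (cinner (f (Suc (fst p), snd p)) x))^2)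
      = (\<Sum>q\<in>\<sigma> ` F. (cmod (cinner (f q) x))^2)"
    using sum.reindex[OF inj, of "\<lambda>q. (cmod (cinner (f q) x))^2"] by (simp add: \<sigma>_def o_def)
  also have "\<dots> \<le> (norm x)^2" by (rule bessel_finite[OF assms(1)]) (use assms(2) in simp)
  finally show ?thesis .
qed

lemma shift_coef_summable:
  fixes f :: "nat \<times> nat \<Rightarrow> 'a::complex_inner"
  assumes "ortho f"
  shows "(\<lambda>p. (cmod (cinner (f (Suc (fst p), snd p)) x))^2) summable_on UNIV"
  by (rule nonneg_bdd_above_summable_on) (auto intro!: bdd_aboveI[of _ "(norm x)^2"] shift_coef_bound[OF assms])

lemma shift_has_sum:
  assumes "ortho f"
  shows "((\<lambda>p. scaleC (cinner (f (Suc (fst p), snd p)) x) (f p)) has_sum shiftop (f::nat\<times>nat \<Rightarrow> 'a::chilbert_space) x) UNIV"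
  unfolding shiftop_def
  by (rule has_sum_infsum, rule ortho_summable[OF assms shift_coef_summable[OF assms]])

lemma shiftop_bounded_clinear:
  fixes f :: "nat\<times>nat \<Rightarrow> 'a::chilbert_space"
  assumes "ortho f"
  shows "bounded_clinear_op (shiftop f)"
  unfolding bounded_clinear_op_def clinear_on_def cbounded_on_def
proof (intro conjI ballI allI exI)
  fix x y :: 'a
  have H: "((\<lambda>p. scaleC (cinner (f (Suc (fst p), snd p)) x) (f p) + scaleC (cinner (f (Suc (fst p), snd p)) y) (f p))
     has_sum (shiftop f x + shiftop f y)) UNIV"
    by (rule has_sum_add[OF shift_has_sum[OF assms] shift_has_sum[OF assms]])
  have eq: "(\<lambda>p. scaleC (cinner (f (Suc (fst p), snd p)) x) (f p) + scaleC (cinner (f (Suc (fst p), snd p)) y) (f p))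
     = (\<lambda>p. scaleC (cinner (f (Suc (fst p), snd p)) (x + y)) (f p))"
    by (simp add: cinner_add_right scaleC_add_left)
  show "shiftop f (x + y) = shiftop f x + shiftop f y"
    using has_sum_unique[OF shift_has_sum[OF assms, of "x + y"] H[unfolded eq]] .
next
  fix c x
  have H: "((\<lambda>p. scaleC c (scaleC (cinner (f (Suc (fst p), snd p)) x) (f p))) has_sum scaleC c (shiftop f x)) UNIV"
    by (rule has_sum_bounded_linear[OF bounded_linear_scaleC shift_has_sum[OF assms]])
  have eq: "(\<lambda>p. scaleC c (scaleC (cinner (f (Suc (fst p), snd p)) x) (f p)))
     = (\<lambda>p. scaleC (cinner (f (Suc (fst p), snd p)) (scaleC c x)) (f p))"
    by (simp add: cinner_scaleC_right scaleC_scaleC)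
  show "shiftop f (scaleC c x) = scaleC c (shiftop f x)"
    using has_sum_unique[OF shift_has_sum[OF assms, of "scaleC c x"] H[unfolded eq]] .
next
  fix x :: 'a
  have "(norm (shiftop f x))^2 \<le> (norm x)^2"
    by (rule ortho_has_sum_norm[OF assms shift_has_sum[OF assms]]) (rule shift_coef_bound[OF assms])
  then show "norm (shiftop f x) \<le> 1 * norm x" using power2_le_imp_le by fastforce
qed

definition eigv :: "(nat \<times> nat \<Rightarrow> 'a::complex_inner) \<Rightarrow> complex \<Rightarrow> nat \<Rightarrow> 'a" where
  "eigv f l k = infsum (\<lambda>p. scaleC (if snd p = k then l ^ fst p else 0) (f p)) UNIV"

lemma eig_coef_summable:
  assumes "cmod l < 1"
  shows "(\<lambda>p::nat\<times>nat. (cmod (if snd p = k then l ^ fst p else 0))^2) summable_on UNIV"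
proof (rule nonneg_bdd_above_summable_on)
  define r where "r = (cmod l)^2"
  have r0: "0 \<le> r" and r1: "r < 1" unfolding r_def using assms by (auto simp: power_less_one_iff abs_square_less_1)
  have pt: "(cmod (if snd p = k then l ^ fst p else 0))^2 = (if snd p = k then r ^ fst p else 0)" for p :: "nat\<times>nat"
    by (simp add: r_def norm_power power_mult[symmetric] mult.commute)
  have bd: "(\<Sum>p\<in>F. (cmod (if snd p = k then l ^ fst p else 0))^2) \<le> (\<Sum>n. r ^ n)" if "finite F" for F :: "(nat\<times>nat) set"
  proof -
    define G where "G = {p\<in>F. snd p = k}"
    have "(\<Sum>p\<in>F. (cmod (if snd p = k then l ^ fst p else 0))^2) = (\<Sum>p\<in>G. r ^ fst p)"
      unfolding pt G_def using that by (simp add: sum.inter_filter)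
    also have "\<dots> = (\<Sum>n\<in>fst ` G. r ^ n)"
      by (subst sum.reindex) (auto simp: inj_on_def G_def prod_eq_iff)
    also have "\<dots> \<le> (\<Sum>n. r ^ n)"
      by (rule sum_le_suminf) (use r0 r1 that G_def in \<open>auto intro!: summable_geometric\<close>)
    finally show ?thesis .
  qed
  show "bdd_above (sum (\<lambda>p. (cmod (if snd p = k then l ^ fst p else 0))^2) ` {F. F \<subseteq> UNIV \<and> finite F})"
    by (rule bdd_aboveI[of _ "\<Sum>n. r ^ n"]) (auto intro: bd)
qed simp

lemma eig_has_sum:
  assumes "ortho f" "cmod l < 1"
  shows "((\<lambda>p. scaleC (if snd p = k then l ^ fst p else 0) (f p)) has_sum eigv (f::nat\<times>nat \<Rightarrow> 'a::chilbert_space) l k) UNIV"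
  unfolding eigv_def
  by (rule has_sum_infsum, rule ortho_summable[OF assms(1) eig_coef_summable[OF assms(2)]])

lemma eig_coord:
  assumes "ortho f" "cmod l < 1"
  shows "cinner (f (0, j)) (eigv (f::nat\<times>nat \<Rightarrow> 'a::chilbert_space) l k) = (if j = k then 1 else 0)"
  using ortho_has_sum_inner[OF assms(1) eig_has_sum[OF assms], of "(0,j)"] by simp

lemma eig_shift:
  assumes "ortho f" "cmod l < 1"
  shows "shiftop f (eigv (f::nat\<times>nat \<Rightarrow> 'a::chilbert_space) l k) = scaleC l (eigv f l k)"
proof -
  have co: "cinner (f (Suc (fst p), snd p)) (eigv f l k) = l * (if snd p = k then l ^ fst p else 0)" for p
    using ortho_has_sum_inner[OF assms(1) eig_has_sum[OF assms], of "(Suc (fst p), snd p)"] by simp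
  have H: "((\<lambda>p. scaleC l (scaleC (if snd p = k then l ^ fst p else 0) (f p))) has_sum scaleC l (eigv f l k)) UNIV"
    by (rule has_sum_bounded_linear[OF bounded_linear_scaleC eig_has_sum[OF assms]])
  have eq: "(\<lambda>p. scaleC l (scaleC (if snd p = k then l ^ fst p else 0) (f p)))
     = (\<lambda>p. scaleC (cinner (f (Suc (fst p), snd p)) (eigv f l k)) (f p))"
    by (simp add: co scaleC_scaleC)
  show ?thesis
    using has_sum_unique[OF shift_has_sum[OF assms(1), of "eigv f l k"] H[unfolded eq]] .
qed

lemma csubspace_sum:
  assumes "csubspace M" "\<And>k. k \<in> K \<Longrightarrow> x k \<in> M"
  shows "(\<Sum>k\<in>K. x k) \<in> M"
  using assms(2)
proof (induction K rule: infinite_finite_induct)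
  case (infinite A) then show ?case using assms(1) by (simp add: csubspace_def)
next
  case empty then show ?case using assms(1) by (simp add: csubspace_def)
next
  case (insert a F) then show ?case using assms(1) by (simp add: csubspace_def)
qed

lemma clinear_on_sum:
  assumes "csubspace M" "clinear_on M J" "\<And>k. k \<in> K \<Longrightarrow> x k \<in> M"
  shows "J (\<Sum>k\<in>K. x k) = (\<Sum>k\<in>K. J (x k))"
  using assms(3)
proof (induction K rule: infinite_finite_induct)
  have J0: "J 0 = 0"
  proof -
    have "0 \<in> M" using assms(1) by (simp add: csubspace_def)
    then have "J (scaleC 0 0) = scaleC 0 (J 0)" using assms(2) unfolding clinear_on_def by blast
    then show ?thesis by simp
  qed
  { case (infinite A) then show ?case using J0 by simp }
  { case empty then show ?case using J0 by simp }
next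
  case (insert a F)
  have "J (x a + (\<Sum>k\<in>F. x k)) = J (x a) + J (\<Sum>k\<in>F. x k)"
    using assms(2) insert.prems csubspace_sum[OF assms(1), of F x] unfolding clinear_on_def by auto
  then show ?case using insert by simp
qed

lemma main_lemma:
  fixes T :: "'h::chilbert_space \<Rightarrow> 'h" and f :: "nat \<times> nat \<Rightarrow> 'h"
  assumes of: "ortho f" and M: "csubspace M" and bij: "bij_betw J M UNIV" and lin: "clinear_on M J"
    and sim: "\<forall>x\<in>M. T x = inv_into M J (scaleC c (shiftop f (J x)))"
    and c: "c \<noteq> 0" and mu: "cmod \<mu> < cmod c"
  shows "\<mu> \<in> point_spectrum T \<and> \<not> cfinite_dim (eigenspace T \<mu>)"
proof -
  define l where "l = \<mu> / c"
  have l1: "cmod l < 1" using mu c by (simp add: l_def norm_divide divide_less_eq)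
  have cl: "c * l = \<mu>" using c by (simp add: l_def)
  define w where "w k = inv_into M J (eigv f l k)" for k
  have inj: "inj_on J M" using bij by (simp add: bij_betw_def)
  have wM: "w k \<in> M" for k unfolding w_def using bij by (simp add: bij_betw_def inv_into_into)
  have Jw: "J (w k) = eigv f l k" for k unfolding w_def using bij by (simp add: bij_betw_def f_inv_into_f)
  have Tw: "T (w k) = scaleC \<mu> (w k)" for k
  proof -
    have "T (w k) = inv_into M J (scaleC \<mu> (eigv f l k))"
      using sim wM[of k] by (simp add: Jw eig_shift[OF of l1] scaleC_scaleC cl)
    also have "scaleC \<mu> (eigv f l k) = J (scaleC \<mu> (w k))"
      using lin wM[of k] by (simp add: clinear_on_def Jw)
    also have "inv_into M J (J (scaleC \<mu> (w k))) = scaleC \<mu> (w k)"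
      using inj M wM[of k] by (simp add: csubspace_def inv_into_f_f)
    finally show ?thesis .
  qed
  define \<phi> where "\<phi> k x = cinner (f (0, k)) (J x)" for k x
  have phiw: "\<phi> k (w j) = (if j = k then 1 else 0)" for j k
    unfolding \<phi>_def Jw using eig_coord[OF of l1, of k j] by simp
  have philin: "\<phi> k (\<Sum>v\<in>S. scaleC (u v) v) = (\<Sum>v\<in>S. u v * \<phi> k v)" if "S \<subseteq> M" for S u k
  proof -
    have "J (\<Sum>v\<in>S. scaleC (u v) v) = (\<Sum>v\<in>S. J (scaleC (u v) v))"
      by (rule clinear_on_sum[OF M lin]) (use that M in \<open>auto simp: csubspace_def\<close>)
    also have "\<dots> = (\<Sum>v\<in>S. scaleC (u v) (J v))"
      using that lin by (intro sum.cong) (auto simp: clinear_on_def)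
    finally show ?thesis unfolding \<phi>_def by (simp add: cinner_sum_right cinner_scaleC_right)
  qed
  have indep: "cvs.independent (range w)"
    unfolding cvs.independent_explicit_finite_subsets
  proof (intro allI impI ballI)
    fix S u v
    assume S: "S \<subseteq> range w" "finite S" and su: "(\<Sum>v\<in>S. scaleC (u v) v) = 0" and v: "v \<in> S"
    then obtain k where k: "v = w k" by blast
    have SM: "S \<subseteq> M" using S(1) wM by blast
    have "0 = \<phi> k (\<Sum>v\<in>S. scaleC (u v) v)"
      unfolding su \<phi>_def using clinear_on_sum[OF M lin, of "{}"] by simp
    also have "\<dots> = (\<Sum>x\<in>S. u x * \<phi> k x)" by (rule philin[OF SM])
    also have "\<dots> = (\<Sum>x\<in>S. if x = v then u x else 0)"
    proof (intro sum.cong refl)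
      fix x assume "x \<in> S"
      then obtain j where j: "x = w j" using S(1) by blast
      show "u x * \<phi> k x = (if x = v then u x else 0)"
        using phiw[where j=j and k=k] phiw[where j=k and k=k] k j by auto
    qed
    also have "\<dots> = u v" using S(2) v by (simp add: sum.delta)
    finally show "u v = 0" by simp
  qed
  have injw: "inj w"
  proof
    fix i j assume "w i = w j"
    then have "\<phi> j (w i) = \<phi> j (w j)" by simp
    then show "i = j" using phiw[where j=i and k=j] phiw[where j=j and k=j] by (auto split: if_splits)
  qed
  have w0: "w 0 \<noteq> 0"
  proof
    assume "w 0 = 0"
    moreover have "\<phi> 0 0 = 0" using philin[where S="{}" and k=0] by simp
    ultimately show False using phiw[where j=0 and k=0] by simp
  qed
  have pt: "\<mu> \<in> point_spectrum T" unfolding point_spectrum_def using w0 Tw[of 0] by blast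
  have "\<not> cfinite_dim (eigenspace T \<mu>)"
  proof
    assume "cfinite_dim (eigenspace T \<mu>)"
    then obtain F where F: "finite F" "cspan F = eigenspace T \<mu>" unfolding cfinite_dim_def by blast
    have "range w \<subseteq> cvs.span F" using Tw F(2) by (auto simp: eigenspace_def cspan_eq[symmetric])
    then have "finite (range w)" using cvs.independent_span_bound[OF F(1) indep] by blast
    then show False using injw finite_imageD by (metis infinite_UNIV_nat)
  qed
  then show ?thesis using pt by blast
qed


theorem corollary2p3:
  fixes T :: "'h::chilbert_space \<Rightarrow> 'h"
  assumes "countably_dense (UNIV :: 'h set)"
    and "\<not> cfinite_dim (UNIV :: 'h set)"
    and "bounded_clinear_op T"
    and "interior (point_spectrum T) = {}
         \<or> interior (essential_spectrum T) = {}
         \<or> (\<forall>\<alpha>\<in>point_spectrum T. \<alpha> \<noteq> 0 \<longrightarrow> cfinite_dim (eigenspace T \<alpha>))"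
  shows "\<not> universal_op T"
proof
  assume U: "universal_op T"
  obtain e0 :: "nat \<Rightarrow> 'h" where e0: "ortho e0" using exists_ortho_seq[OF assms(2)] by blast
  define f where "f p = e0 (prod_encode p)" for p
  have of: "ortho f" using e0 unfolding ortho_def f_def by simp
  have "bounded_clinear_op (shiftop f)" by (rule shiftop_bounded_clinear[OF of])
  then obtain M c where M: "csubspace M" and c: "c \<noteq> 0"
    and sim: "similar_ops M T UNIV (\<lambda>x. scaleC c (shiftop f x))"
    using U unfolding universal_op_def by blast
  then obtain J where J: "bij_betw J M UNIV" "clinear_on M J"
    "\<forall>x\<in>M. T x = inv_into M J (scaleC c (shiftop f (J x)))"
    unfolding similar_ops_def by blast
  have key: "\<mu> \<in> point_spectrum T \<and> \<not> cfinite_dim (eigenspace T \<mu>)" if "cmod \<mu> < cmod c" for \<mu> :: complex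
    by (rule main_lemma[OF of M J(1) J(2) J(3) c that])
  have sub1: "ball 0 (cmod c) \<subseteq> point_spectrum T" using key by (auto simp: dist_norm)
  have sub2: "ball 0 (cmod c) \<subseteq> essential_spectrum T"
  proof
    fix \<mu> :: complex assume "\<mu> \<in> ball 0 (cmod c)"
    then have "\<not> cfinite_dim (eigenspace T \<mu>)" using key by (auto simp: dist_norm)
    moreover have "{x. T x - scaleC \<mu> x = 0} = eigenspace T \<mu>" by (auto simp: eigenspace_def)
    ultimately show "\<mu> \<in> essential_spectrum T" by (auto simp: essential_spectrum_def fredholm_def)
  qed
  have z: "0 \<in> ball 0 (cmod c)" using c by simp
  have i1: "interior (point_spectrum T) \<noteq> {}"
    using interior_maximal[OF sub1 open_ball] z by blast
  have i2: "interior (essential_spectrum T) \<noteq> {}"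
    using interior_maximal[OF sub2 open_ball] z by blast
  have "cmod (c / 2) < cmod c" using c by (simp add: norm_divide)
  then have i3: "c / 2 \<in> point_spectrum T \<and> c / 2 \<noteq> 0 \<and> \<not> cfinite_dim (eigenspace T (c / 2))"
    using key c by simp
  show False using assms(4) i1 i2 i3 by blast
qed

end
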